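(* There is an absolute constant $C$ such that for every coverage function $f\colon\mathbb F_2^n\to[0,1]$ and every $\epsilon\in(0,1]$, $R^{lin}_{\epsilon\text{-approx}}(f)\le C/\epsilon$.
   Context: $f\colon 2^{[n]}\to\mathbb R$ (identified with a function on $\mathbb F_2^n$ via $x\leftrightarrow\{i:x_i=1\}$) is a coverage function if there is a finite universe $U=\{1,\dots,m\}$, subsets $A_1,\dots,A_n\subseteq U$ and non-negative weights $w_1,\dots,w_m$ with $f(S)=\sum_{u\in\bigcup_{j\in S}A_j}w_u$. For $S\subseteq[n]$, $\chi_S(x)=\sum_{i\in S}x_i\pmod2$. Approximate randomized $\mathbb F_2$-sketch complexity: $R^{lin}_{\epsilon\text{-approx}}(f)$ is the smallest integer $k$ such that there exist a probability distribution over $k$-tuples of subsets $\mathbf S_1,\dots,\mathbf S_k\subseteq[n]$ and $g\colon\mathbb F_2^k\to\mathbb R$ with $\mathbb E_{\mathbf S_1,\dots,\mathbf S_k}[(g(\chi_{\mathbf S_1}(x),\dots,\chi_{\mathbf S_k}(x))-f(x))^2]\le\epsilon$ for every $x\in\mathbb F_2^n$. *)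

theory Defs
  imports "HOL-Probability.Probability"
begin

text \<open>Points of F_2^n are identified with subsets of the index set {..<n}
  (0-based indexing of [n]).\<close>

definition chi :: "nat set \<Rightarrow> nat set \<Rightarrow> bool" where
  "chi S x = odd (card (S \<inter> x))"

definition coverage_fun :: "nat \<Rightarrow> (nat set \<Rightarrow> real) \<Rightarrow> bool" where
  "coverage_fun n f \<longleftrightarrow>
     (\<exists>(m::nat) (A :: nat \<Rightarrow> nat set) (w :: nat \<Rightarrow> real).
        (\<forall>j<n. A j \<subseteq> {..<m}) \<and> (\<forall>u<m. w u \<ge> 0) \<and>
        (\<forall>S. S \<subseteq> {..<n} \<longrightarrow> f S = (\<Sum>u\<in>(\<Union>j\<in>S. A j). w u)))"

text \<open>A randomized F_2-sketch of size k: a distribution over k-tuples (lists of length k)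
  of subsets of [n] together with a decoding function g on F_2^k (bool lists of length k).\<close>
definition approx_sketch :: "nat \<Rightarrow> (nat set \<Rightarrow> real) \<Rightarrow> real \<Rightarrow> nat \<Rightarrow> bool" where
  "approx_sketch n f eps k \<longleftrightarrow>
     (\<exists>(p :: nat set list pmf) (g :: bool list \<Rightarrow> real).
        (\<forall>Ss\<in>set_pmf p. length Ss = k \<and> (\<forall>S\<in>set Ss. S \<subseteq> {..<n})) \<and>
        (\<forall>x. x \<subseteq> {..<n} \<longrightarrow>
           measure_pmf.expectation p (\<lambda>Ss. (g (map (\<lambda>S. chi S x) Ss) - f x)\<^sup>2) \<le> eps))"

definition R_lin_approx :: "nat \<Rightarrow> (nat set \<Rightarrow> real) \<Rightarrow> real \<Rightarrow> nat" where
  "R_lin_approx n f eps = (LEAST k. approx_sketch n f eps k)"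

end

theory Submission
  imports Defs
begin


fun iid :: "'a pmf \<Rightarrow> nat \<Rightarrow> 'a list pmf" where
  "iid r 0 = return_pmf []"
| "iid r (Suc k) = bind_pmf r (\<lambda>s. map_pmf (\<lambda>Ss. s # Ss) (iid r k))"

lemma set_iid: "Ss \<in> set_pmf (iid r k) \<Longrightarrow> length Ss = k \<and> set Ss \<subseteq> set_pmf r"
  by (induction k arbitrary: Ss) force+

lemma finite_iid: "finite (set_pmf r) \<Longrightarrow> finite (set_pmf (iid r k))"
  by (induction k) auto

lemma E_sum: "finite (set_pmf p) \<Longrightarrow> measure_pmf.expectation p (h::_\<Rightarrow>real) = (\<Sum>a\<in>set_pmf p. pmf p a * h a)"
  by (subst integral_measure_pmf[of "set_pmf p"]) auto

lemma iid_var: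
  fixes Y :: "'a \<Rightarrow> real"
  assumes fin: "finite (set_pmf r)" and mean: "measure_pmf.expectation r Y = 0"
    and bnd: "\<And>s. s \<in> set_pmf r \<Longrightarrow> (Y s)\<^sup>2 \<le> c"
  shows "measure_pmf.expectation (iid r k) (\<lambda>Ss. (sum_list (map Y Ss))\<^sup>2) \<le> k * c"
proof (induction k)
  case 0
  then show ?case by simp
next
  case (Suc k)
  define ET where "ET = measure_pmf.expectation (iid r k) (\<lambda>Ss. sum_list (map Y Ss))"
  define ET2 where "ET2 = measure_pmf.expectation (iid r k) (\<lambda>Ss. (sum_list (map Y Ss))\<^sup>2)"
  have fk: "finite (set_pmf (iid r k))" using finite_iid[OF fin] .
  have inner: "measure_pmf.expectation (map_pmf ((#) a) (iid r k)) (\<lambda>Ss. (sum_list (map Y Ss))\<^sup>2)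
      = (Y a)\<^sup>2 + 2 * Y a * ET + ET2" for a
  proof -
    have "measure_pmf.expectation (map_pmf ((#) a) (iid r k)) (\<lambda>Ss. (sum_list (map Y Ss))\<^sup>2)
        = measure_pmf.expectation (iid r k) (\<lambda>Ss. (Y a)\<^sup>2 + 2 * Y a * sum_list (map Y Ss) + (sum_list (map Y Ss))\<^sup>2)"
      by (simp add: power2_eq_square algebra_simps)
    also have "\<dots> = (\<Sum>b\<in>set_pmf (iid r k). pmf (iid r k) b * ((Y a)\<^sup>2 + 2 * Y a * sum_list (map Y b) + (sum_list (map Y b))\<^sup>2))"
      by (rule E_sum[OF fk])
    also have "\<dots> = (Y a)\<^sup>2 * (\<Sum>b\<in>set_pmf (iid r k). pmf (iid r k) b) + 2 * Y a * (\<Sum>b\<in>set_pmf (iid r k). pmf (iid r k) b * sum_list (map Y b))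
        + (\<Sum>b\<in>set_pmf (iid r k). pmf (iid r k) b * (sum_list (map Y b))\<^sup>2)"
      by (simp add: algebra_simps sum.distrib sum_distrib_left)
    also have "\<dots> = (Y a)\<^sup>2 + 2 * Y a * ET + ET2"
      unfolding ET_def ET2_def by (simp add: E_sum[OF fk] sum_pmf_eq_1 fk)
    finally show ?thesis .
  qed
  have "measure_pmf.expectation (iid r (Suc k)) (\<lambda>Ss. (sum_list (map Y Ss))\<^sup>2)
      = (\<Sum>a\<in>set_pmf r. pmf r a * ((Y a)\<^sup>2 + 2 * Y a * ET + ET2))"
    by (simp only: iid.simps, subst pmf_expectation_bind[of "set_pmf r"]) (use fin fk inner in auto)
  also have "\<dots> = (\<Sum>a\<in>set_pmf r. pmf r a * (Y a)\<^sup>2) + 2 * ET * (\<Sum>a\<in>set_pmf r. pmf r a * Y a) + ET2 * (\<Sum>a\<in>set_pmf r. pmf r a)"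
    by (simp add: algebra_simps sum.distrib sum_distrib_left)
  also have "(\<Sum>a\<in>set_pmf r. pmf r a * Y a) = 0" using mean E_sum[OF fin, of Y] by simp
  also have "(\<Sum>a\<in>set_pmf r. pmf r a) = 1" using fin by (simp add: sum_pmf_eq_1)
  also have "(\<Sum>a\<in>set_pmf r. pmf r a * (Y a)\<^sup>2) \<le> (\<Sum>a\<in>set_pmf r. pmf r a * c)"
    by (intro sum_mono mult_left_mono bnd) auto
  also have "\<dots> = c" using fin by (simp add: sum_distrib_right[symmetric] sum_pmf_eq_1)
  finally show ?case using Suc unfolding ET2_def by (simp add: algebra_simps)
qed



lemma parity_half:
  fixes B x :: "nat set"
  assumes fB: "finite B" and j: "j \<in> B" "j \<in> x"
  shows "2 * card {S\<in>Pow B. odd (card (S \<inter> x))} = card (Pow B)"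
proof -
  define t where "t S = (if j \<in> S then S - {j} else insert j S)" for S :: "nat set"
  define O' where "O' = {S\<in>Pow B. odd (card (S \<inter> x))}"
  define E where "E = {S\<in>Pow B. even (card (S \<inter> x))}"
  have par: "odd (card (t S \<inter> x)) \<longleftrightarrow> even (card (S \<inter> x))" if "S \<subseteq> B" for S
  proof -
    have fS: "finite (S \<inter> x)" using fB that finite_subset by blast
    show ?thesis
    proof (cases "j \<in> S")
      case True
      have "t S \<inter> x = (S \<inter> x) - {j}" using True unfolding t_def by auto
      moreover have "card (S \<inter> x) = Suc (card ((S \<inter> x) - {j}))"
        using True j fS by (metis IntI card_Suc_Diff1)
      ultimately show ?thesis by simp
    next
      case False
      have "t S \<inter> x = insert j (S \<inter> x)" using False j unfolding t_def by auto
      then show ?thesis using False fS by simp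
    qed
  qed
  have tt: "t (t S) = S" for S unfolding t_def by auto
  have tB: "S \<subseteq> B \<Longrightarrow> t S \<subseteq> B" for S using j unfolding t_def by auto
  have "bij_betw t O' E"
  proof (rule bij_betwI[where g=t])
    show "t \<in> O' \<rightarrow> E" using par tB unfolding O'_def E_def by auto
    show "t \<in> E \<rightarrow> O'" using par tB unfolding O'_def E_def by auto
  qed (auto simp: tt)
  then have "card O' = card E" by (rule bij_betw_same_card)
  moreover have "card (Pow B) = card O' + card E"
  proof -
    have "Pow B = O' \<union> E" "O' \<inter> E = {}" unfolding O'_def E_def by auto
    moreover have "finite O'" "finite E" unfolding O'_def E_def using fB by auto
    ultimately show ?thesis by (simp add: card_Un_disjoint)
  qed
  ultimately show ?thesis unfolding O'_def by simp
qed

lemma E_parity: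
  assumes fB: "finite B"
  shows "measure_pmf.expectation (pmf_of_set (Pow B)) (\<lambda>S. if chi S x then 1 else 0 :: real)
     = (if B \<inter> x = {} then 0 else 1/2)"
proof -
  have ne: "Pow B \<noteq> {}" by auto
  have "measure_pmf.expectation (pmf_of_set (Pow B)) (\<lambda>S. if chi S x then 1 else 0 :: real)
       = (\<Sum>S\<in>Pow B. if chi S x then 1 else 0) / card (Pow B)"
    using fB ne by (simp add: integral_pmf_of_set)
  also have "(\<Sum>S\<in>Pow B. if chi S x then 1 else 0 :: real) = card {S\<in>Pow B. odd (card (S \<inter> x))}"
    unfolding chi_def by (simp add: sum.If_cases fB Collect_conj_eq Int_commute Pow_def)
  finally have eq: "measure_pmf.expectation (pmf_of_set (Pow B)) (\<lambda>S. if chi S x then 1 else 0 :: real)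
      = card {S\<in>Pow B. odd (card (S \<inter> x))} / card (Pow B)" .
  show ?thesis
  proof (cases "B \<inter> x = {}")
    case True
    have "S \<inter> x = {}" if "S \<subseteq> B" for S using True that by blast
    then have "{S\<in>Pow B. odd (card (S \<inter> x))} = {}" by auto
    then have c0: "card {S\<in>Pow B. odd (card (S \<inter> x))} = 0" by (simp only: card.empty)
    have "measure_pmf.expectation (pmf_of_set (Pow B)) (\<lambda>S. if chi S x then 1 else 0 :: real) = 0"
      by (subst eq) (simp only: c0 of_nat_0 div_0)
    then show ?thesis by (simp only: if_P[OF True])
  next
    case False
    then obtain j where "j \<in> B" "j \<in> x" by auto
    from parity_half[OF fB this] have "real (2 * card {S\<in>Pow B. odd (card (S \<inter> x))}) = real (card (Pow B))"
      by (simp only:)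
    then have h: "real (card (Pow B)) = 2 * real (card {S\<in>Pow B. odd (card (S \<inter> x))})" by (simp only: of_nat_mult of_nat_numeral)
    have "card (Pow B) > 0" using fB by (simp add: card_gt_0_iff) blast
    then have cpos: "real (card {S\<in>Pow B. odd (card (S \<inter> x))}) > 0" using h by linarith
    have "measure_pmf.expectation (pmf_of_set (Pow B)) (\<lambda>S. if chi S x then 1 else 0 :: real) = 1/2"
      unfolding eq h using cpos by simp
    then show ?thesis by (simp only: if_not_P[OF False])
  qed
qed



lemma sl: "sum_list (map (\<lambda>S. a S - c) xs) = sum_list (map a xs) - real (length xs) * (c::real)"
  by (induction xs) (auto simp: algebra_simps)

lemma sketch_bound:
  assumes cov: "coverage_fun n f" and f01: "\<forall>x. x \<subseteq> {..<n} \<longrightarrow> 0 \<le> f x \<and> f x \<le> 1"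
    and eps: "0 < eps" "eps \<le> 1"
  shows "approx_sketch n f eps (nat \<lceil>4/eps\<rceil>)"
proof -
  obtain m A w where H: "(\<forall>j<n. A j \<subseteq> {..<m::nat}) \<and> (\<forall>u<m. (w u::real) \<ge> 0) \<and>
        (\<forall>S. S \<subseteq> {..<n} \<longrightarrow> f S = (\<Sum>u\<in>(\<Union>j\<in>S. A j). w u))"
    using cov unfolding coverage_fun_def by blast
  note Am = conjunct1[OF H] and wpos = conjunct1[OF conjunct2[OF H]] and fdef = conjunct2[OF conjunct2[OF H]]
  define U where "U = (\<Union>j\<in>{..<n}. A j)"
  define Bu where "Bu u = {j. j < n \<and> u \<in> A j}" for u
  define k where "k = nat \<lceil>4/eps\<rceil>"
  have UM: "U \<subseteq> {..<m}" using Am unfolding U_def by auto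
  have finU: "finite U" using UM finite_subset by blast
  have wU: "u \<in> U \<Longrightarrow> w u \<ge> 0" for u using UM wpos by auto
  have finB: "finite (Bu u)" for u unfolding Bu_def by auto
  have BuN: "Bu u \<subseteq> {..<n}" for u unfolding Bu_def by auto
  have fx: "f x = (\<Sum>u\<in>U. if x \<inter> Bu u \<noteq> {} then w u else 0)" if x: "x \<subseteq> {..<n}" for x
  proof -
    have "(\<Union>j\<in>x. A j) = {u\<in>U. x \<inter> Bu u \<noteq> {}}" using x unfolding U_def Bu_def by auto
    then show ?thesis using fdef x finU by (simp add: sum.inter_filter)
  qed
  define W where "W = sum w U"
  have Wf: "W = f {..<n}"
  proof -
    have "u \<in> U \<Longrightarrow> {..<n} \<inter> Bu u \<noteq> {}" for u unfolding U_def Bu_def by auto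
    then show ?thesis unfolding W_def using fx[of "{..<n}"] by (auto intro!: sum.cong)
  qed
  have W01: "0 \<le> W" "W \<le> 1" using f01 Wf by auto
  have kpos: "k > 0" unfolding k_def using eps by simp
  have kge: "real k \<ge> 4/eps" unfolding k_def by linarith
  show ?thesis
  proof (cases "W = 0")
    case True
    have "\<forall>u\<in>U. w u = 0" using True wU finU unfolding W_def by (simp add: sum_nonneg_eq_0_iff)
    then have f0: "x \<subseteq> {..<n} \<Longrightarrow> f x = 0" for x using fx by (auto intro!: sum.neutral)
    show ?thesis unfolding approx_sketch_def k_def[symmetric]
      by (rule exI[of _ "return_pmf (replicate k {})"], rule exI[of _ "\<lambda>_. 0"]) (use f0 eps in auto)
  next
    case False
    then have Wpos: "W > 0" using W01 by simp
    define qf where "qf u = (if u \<in> U then w u / W else 0)" for u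
    have qnn: "0 \<le> qf u" for u unfolding qf_def using wU Wpos by auto
    have qsum: "(\<integral>\<^sup>+u. ennreal (qf u) \<partial>count_space UNIV) = 1"
    proof -
      have "(\<integral>\<^sup>+u. ennreal (qf u) \<partial>count_space UNIV) = (\<Sum>u\<in>U. ennreal (qf u))"
        by (rule nn_integral_count_space') (use finU in \<open>auto simp: qf_def\<close>)
      also have "\<dots> = ennreal (\<Sum>u\<in>U. qf u)" using qnn by (simp add: sum_ennreal)
      also have "(\<Sum>u\<in>U. qf u) = 1" unfolding qf_def using Wpos by (simp add: sum_divide_distrib[symmetric] W_def)
      finally show ?thesis by simp
    qed
    define q where "q = embed_pmf qf"
    have pq: "pmf q u = qf u" for u unfolding q_def using pmf_embed_pmf[OF qnn qsum] .
    have q0: "x \<notin> U \<Longrightarrow> qf x = 0" for x by (simp add: qf_def)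
    have sq: "set_pmf q \<subseteq> U" unfolding q_def set_embed_pmf[OF qnn qsum] using q0 by blast
    define r where "r = bind_pmf q (\<lambda>u. pmf_of_set (Pow (Bu u)))"
    have spo: "set_pmf (pmf_of_set (Pow (Bu u))) = Pow (Bu u)" for u using finB[of u] by (intro set_pmf_of_set) auto
    have sr: "set_pmf r \<subseteq> (\<Union>u\<in>U. Pow (Bu u))" unfolding r_def set_bind_pmf spo using sq by blast
    have finr: "finite (set_pmf r)" using sr finU finB by (meson finite_Pow_iff finite_UN_I finite_subset)
    have srn: "S \<in> set_pmf r \<Longrightarrow> S \<subseteq> {..<n}" for S using sr BuN by blast
    define g where "g bs = (\<Sum>b\<leftarrow>bs. 2 * W * (if b then 1 else 0)) / real k" for bs
    define p where "p = iid r k"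
    have sp: "Ss \<in> set_pmf p \<Longrightarrow> length Ss = k \<and> set Ss \<subseteq> set_pmf r" for Ss
      unfolding p_def by (rule set_iid)
    have finp: "finite (set_pmf p)" unfolding p_def using finite_iid[OF finr] .
    have err: "measure_pmf.expectation p (\<lambda>Ss. (g (map (\<lambda>S. chi S x) Ss) - f x)\<^sup>2) \<le> eps"
      if x: "x \<subseteq> {..<n}" for x
    proof -
      define Y where "Y S = 2 * W * (if chi S x then 1 else 0) - f x" for S
      have Eind: "measure_pmf.expectation r (\<lambda>S. if chi S x then 1 else 0 :: real) = f x / (2 * W)"
      proof -
        have "measure_pmf.expectation r (\<lambda>S. if chi S x then 1 else 0 :: real)
          = (\<Sum>u\<in>U. pmf q u *\<^sub>R measure_pmf.expectation (pmf_of_set (Pow (Bu u))) (\<lambda>S. if chi S x then 1 else 0 :: real))"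
          unfolding r_def by (rule pmf_expectation_bind) (use finU finB sq spo in auto)
        also have "\<dots> = (\<Sum>u\<in>U. (if x \<inter> Bu u \<noteq> {} then w u else 0) / (2 * W))"
          by (rule sum.cong) (auto simp: pq qf_def E_parity[OF finB] Int_commute)
        also have "\<dots> = f x / (2 * W)" using fx[OF x] by (simp add: sum_divide_distrib)
        finally show ?thesis .
      qed
      have EY: "measure_pmf.expectation r Y = 0"
      proof -
        have "measure_pmf.expectation r Y = (\<Sum>a\<in>set_pmf r. pmf r a * Y a)" by (rule E_sum[OF finr])
        also have "\<dots> = (\<Sum>a\<in>set_pmf r. 2 * W * (pmf r a * (if chi a x then 1 else 0)) - f x * pmf r a)"
          by (rule sum.cong) (auto simp: Y_def algebra_simps)
        also have "\<dots> = 2 * W * (\<Sum>a\<in>set_pmf r. pmf r a * (if chi a x then 1 else 0)) - f x * (\<Sum>a\<in>set_pmf r. pmf r a)"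
          by (simp only: sum_subtractf sum_distrib_left)
        also have "\<dots> = 0" using Eind Wpos by (simp add: E_sum[OF finr] sum_pmf_eq_1 finr)
        finally show ?thesis .
      qed
      have Yb: "(Y s)\<^sup>2 \<le> 4" for s
      proof -
        have fx01: "0 \<le> f x" "f x \<le> 1" using f01 x by auto
        have "\<bar>Y s\<bar> \<le> 2" unfolding Y_def using fx01 W01 by (cases "chi s x") auto
        then have "\<bar>Y s\<bar>\<^sup>2 \<le> 2\<^sup>2" by (rule power_mono) simp
        then show ?thesis by simp
      qed
      have V: "measure_pmf.expectation p (\<lambda>Ss. (sum_list (map Y Ss))\<^sup>2) \<le> real k * 4"
        unfolding p_def using iid_var[OF finr EY Yb] .
      have eqd: "(g (map (\<lambda>S. chi S x) Ss) - f x)\<^sup>2 = (sum_list (map Y Ss))\<^sup>2 / (real k)\<^sup>2"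
        if "Ss \<in> set_pmf p" for Ss
      proof -
        have l: "length Ss = k" using sp[OF that] by simp
        have "g (map (\<lambda>S. chi S x) Ss) - f x = (sum_list (map Y Ss)) / real k"
          unfolding g_def Y_def sl using l kpos by (simp add: o_def field_simps)
        then show ?thesis by (simp add: power_divide)
      qed
      have "measure_pmf.expectation p (\<lambda>Ss. (g (map (\<lambda>S. chi S x) Ss) - f x)\<^sup>2)
          = measure_pmf.expectation p (\<lambda>Ss. (sum_list (map Y Ss))\<^sup>2) / (real k)\<^sup>2"
        by (simp add: E_sum[OF finp] eqd sum_divide_distrib)
      also have "\<dots> \<le> real k * 4 / (real k)\<^sup>2" using V by (simp add: divide_right_mono)
      also have "\<dots> = 4 / real k" using kpos by (simp add: power2_eq_square)
      also have "\<dots> \<le> eps" using kge eps kpos by (simp add: field_simps)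
      finally show ?thesis .
    qed
    show ?thesis unfolding approx_sketch_def
      by (rule exI[of _ p], rule exI[of _ g]) (use sp srn err k_def in auto)
  qed
qed

theorem mainTheorem15:
  shows "\<exists>C::real. \<forall>(n::nat) (f :: nat set \<Rightarrow> real) (eps::real).
     coverage_fun n f \<and> (\<forall>x. x \<subseteq> {..<n} \<longrightarrow> 0 \<le> f x \<and> f x \<le> 1) \<and>
     0 < eps \<and> eps \<le> 1 \<longrightarrow> real (R_lin_approx n f eps) \<le> C / eps"
proof (rule exI[of _ 5], intro allI impI)
  fix n f and eps :: real
  assume h: "coverage_fun n f \<and> (\<forall>x. x \<subseteq> {..<n} \<longrightarrow> 0 \<le> f x \<and> f x \<le> 1) \<and> 0 < eps \<and> eps \<le> 1"
  then have "approx_sketch n f eps (nat \<lceil>4/eps\<rceil>)" using sketch_bound by blast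
  then have "R_lin_approx n f eps \<le> nat \<lceil>4/eps\<rceil>" unfolding R_lin_approx_def by (rule Least_le)
  then have "real (R_lin_approx n f eps) \<le> real (nat \<lceil>4/eps\<rceil>)" by (rule of_nat_mono)
  also have "\<dots> = real_of_int \<lceil>4/eps\<rceil>" using h by simp
  also have "\<dots> \<le> 4/eps + 1" by (rule of_int_ceiling_le_add_one)
  also have "\<dots> \<le> 5 / eps" using h by (simp add: field_simps)
  finally show "real (R_lin_approx n f eps) \<le> 5 / eps" .
qed

end
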